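(* Let $\mathcal{X}=({\bm X},m^{\bm X}_\bullet,\nu^{\bm X})$, $\mathcal{Y}=({\bm Y},m^{\bm Y}_\bullet,\nu^{\bm Y})$ be Markov chains on finite state spaces, $C:{\bm X}\times{\bm Y}\to\mathbb{R}_+$ a cost matrix, $\delta\in(0,1]$ and $k\in\mathbb{N}\cup\{\infty\}$. Then $\lim_{\epsilon\to0}d^{\delta,(k)}_{\mathrm{WL},\epsilon}(\mathcal{X},\mathcal{Y};C)=d^{\delta,(k)}_{\mathrm{WL}}(\mathcal{X},\mathcal{Y};C)$.
   Context: For $\alpha\in\mathcal{P}({\bm X}),\beta\in\mathcal{P}({\bm Y})$, cost $D$ and $\epsilon\ge0$, the entropy-regularized OT cost is $d^{\epsilon}_{\mathrm W}(\alpha,\beta;D)=\min_{P\in\mathcal{C}(\alpha,\beta)}\sum_{i,j}P_{ij}D_{ij}+\epsilon\sum_{i,j}P_{ij}\log P_{ij}$, where $\mathcal{C}(\alpha,\beta)$ is the set of couplings (matrices with marginals $\alpha,\beta$); $d_{\mathrm W}=d^0_{\mathrm W}$ is the usual OT cost. Define $C^{\epsilon,\delta,(0)}=C$ and $C^{\epsilon,\delta,(l)}_{ij}=\delta C_{ij}+(1-\delta)d^\epsilon_{\mathrm W}(m^{\bm X}_i,m^{\bm Y}_j;C^{\epsilon,\delta,(l-1)})$; set $d^{\delta,(k)}_{\mathrm{WL},\epsilon}(\mathcal{X},\mathcal{Y};C)=d^\epsilon_{\mathrm W}(\nu^{\bm X},\nu^{\bm Y};C^{\epsilon,\delta,(k)})$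 for $k\in\mathbb{N}$ and $d^{\delta,(\infty)}_{\mathrm{WL},\epsilon}=\lim_{k\to\infty}d^{\delta,(k)}_{\mathrm{WL},\epsilon}$ (this limit exists for $\delta>0$). A Markovian coupling between $\mathcal{X}$ and $\mathcal{Y}$ is a (possibly time-inhomogeneous) Markov chain $(X_t,Y_t)_{t\in\mathbb{N}}$ on ${\bm X}\times{\bm Y}$ with $\mathrm{law}(X_0,Y_0)\in\mathcal{C}(\nu^{\bm X},\nu^{\bm Y})$ and conditional law of $(X_{t+1},Y_{t+1})$ given $(X_t,Y_t)=(x,y)$ in $\mathcal{C}(m^{\bm X}_x,m^{\bm Y}_y)$ for all $t,x,y$; $\Pi$ is their set. $d^{\delta,(k)}_{\mathrm{WL}}=\inf_{\Pi}\mathbb{E}\big[\sum_{t=0}^{k-1}\delta(1-\delta)^tC(X_t,Y_t)+(1-\delta)^kC(X_k,Y_k)\big]$ for finite $k$ and $d^{\delta,(\infty)}_{\mathrm{WL}}=\inf_{\Pi}\mathbb{E}\big[\sum_{t\ge0}\delta(1-\delta)^tC(X_t,Y_t)\big]$. *)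

theory Defs
  imports "HOL-Analysis.Analysis" "HOL-Library.Extended_Nat"
begin

definition prob_vec :: "('a::finite \<Rightarrow> real) \<Rightarrow> bool" where
  "prob_vec \<alpha> \<longleftrightarrow> (\<forall>i. 0 \<le> \<alpha> i) \<and> (\<Sum>i\<in>UNIV. \<alpha> i) = 1"

definition markov_kernel :: "('a::finite \<Rightarrow> 'a \<Rightarrow> real) \<Rightarrow> bool" where
  "markov_kernel m \<longleftrightarrow> (\<forall>x. prob_vec (m x))"

definition coupling :: "('a::finite \<Rightarrow> real) \<Rightarrow> ('b::finite \<Rightarrow> real) \<Rightarrow> ('a \<Rightarrow> 'b \<Rightarrow> real) set" where
  "coupling \<alpha> \<beta> = {P. (\<forall>i j. 0 \<le> P i j) \<and> (\<forall>i. (\<Sum>j\<in>UNIV. P i j) = \<alpha> i)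
                        \<and> (\<forall>j. (\<Sum>i\<in>UNIV. P i j) = \<beta> j)}"

text \<open>Entropy-regularized OT cost (the minimum; it is attained, so it equals the infimum).
  Convention 0 log 0 = 0 holds automatically since 0 * ln 0 = 0.\<close>
definition ot_eps :: "real \<Rightarrow> ('a::finite \<Rightarrow> real) \<Rightarrow> ('b::finite \<Rightarrow> real) \<Rightarrow> ('a \<Rightarrow> 'b \<Rightarrow> real) \<Rightarrow> real" where
  "ot_eps \<epsilon> \<alpha> \<beta> D = Inf ((\<lambda>P. (\<Sum>i\<in>UNIV. \<Sum>j\<in>UNIV. P i j * D i j)
        + \<epsilon> * (\<Sum>i\<in>UNIV. \<Sum>j\<in>UNIV. P i j * ln (P i j))) ` coupling \<alpha> \<beta>)"

fun wl_cost :: "real \<Rightarrow> real \<Rightarrow> ('a::finite \<Rightarrow> 'a \<Rightarrow> real) \<Rightarrow> ('b::finite \<Rightarrow> 'b \<Rightarrow> real)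
    \<Rightarrow> ('a \<Rightarrow> 'b \<Rightarrow> real) \<Rightarrow> nat \<Rightarrow> 'a \<Rightarrow> 'b \<Rightarrow> real" where
  "wl_cost \<epsilon> \<delta> mX mY C 0 = C"
| "wl_cost \<epsilon> \<delta> mX mY C (Suc l) =
     (\<lambda>i j. \<delta> * C i j + (1 - \<delta>) * ot_eps \<epsilon> (mX i) (mY j) (wl_cost \<epsilon> \<delta> mX mY C l))"

definition dWL_eps_fin :: "real \<Rightarrow> real \<Rightarrow> ('a::finite \<Rightarrow> 'a \<Rightarrow> real) \<Rightarrow> ('a \<Rightarrow> real)
    \<Rightarrow> ('b::finite \<Rightarrow> 'b \<Rightarrow> real) \<Rightarrow> ('b \<Rightarrow> real) \<Rightarrow> ('a \<Rightarrow> 'b \<Rightarrow> real) \<Rightarrow> nat \<Rightarrow> real" where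
  "dWL_eps_fin \<epsilon> \<delta> mX \<nu>X mY \<nu>Y C k = ot_eps \<epsilon> \<nu>X \<nu>Y (wl_cost \<epsilon> \<delta> mX mY C k)"

definition dWL_eps :: "real \<Rightarrow> real \<Rightarrow> ('a::finite \<Rightarrow> 'a \<Rightarrow> real) \<Rightarrow> ('a \<Rightarrow> real)
    \<Rightarrow> ('b::finite \<Rightarrow> 'b \<Rightarrow> real) \<Rightarrow> ('b \<Rightarrow> real) \<Rightarrow> ('a \<Rightarrow> 'b \<Rightarrow> real) \<Rightarrow> enat \<Rightarrow> real" where
  "dWL_eps \<epsilon> \<delta> mX \<nu>X mY \<nu>Y C k =
     (case k of enat n \<Rightarrow> dWL_eps_fin \<epsilon> \<delta> mX \<nu>X mY \<nu>Y C n
              | \<infinity> \<Rightarrow> lim (\<lambda>n. dWL_eps_fin \<epsilon> \<delta> mX \<nu>X mY \<nu>Y C n))"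

text \<open>A (possibly time-inhomogeneous) Markov chain on X \<times> Y is given by its initial law pi
  and its transition kernels K t (x,y) (a distribution on X \<times> Y).\<close>
definition markov_coupling :: "('a::finite \<Rightarrow> 'a \<Rightarrow> real) \<Rightarrow> ('a \<Rightarrow> real)
    \<Rightarrow> ('b::finite \<Rightarrow> 'b \<Rightarrow> real) \<Rightarrow> ('b \<Rightarrow> real)
    \<Rightarrow> ('a \<Rightarrow> 'b \<Rightarrow> real) \<Rightarrow> (nat \<Rightarrow> 'a \<Rightarrow> 'b \<Rightarrow> 'a \<Rightarrow> 'b \<Rightarrow> real) \<Rightarrow> bool" where
  "markov_coupling mX \<nu>X mY \<nu>Y \<pi> K \<longleftrightarrow>
     \<pi> \<in> coupling \<nu>X \<nu>Y \<and> (\<forall>t x y. K t x y \<in> coupling (mX x) (mY y))"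

fun mc_law :: "('a::finite \<Rightarrow> 'b::finite \<Rightarrow> real) \<Rightarrow> (nat \<Rightarrow> 'a \<Rightarrow> 'b \<Rightarrow> 'a \<Rightarrow> 'b \<Rightarrow> real)
    \<Rightarrow> nat \<Rightarrow> 'a \<Rightarrow> 'b \<Rightarrow> real" where
  "mc_law \<pi> K 0 = \<pi>"
| "mc_law \<pi> K (Suc t) =
     (\<lambda>x' y'. \<Sum>x\<in>UNIV. \<Sum>y\<in>UNIV. mc_law \<pi> K t x y * K t x y x' y')"

definition mc_expect :: "('a::finite \<Rightarrow> 'b::finite \<Rightarrow> real) \<Rightarrow> (nat \<Rightarrow> 'a \<Rightarrow> 'b \<Rightarrow> 'a \<Rightarrow> 'b \<Rightarrow> real)
    \<Rightarrow> ('a \<Rightarrow> 'b \<Rightarrow> real) \<Rightarrow> nat \<Rightarrow> real" where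
  "mc_expect \<pi> K C t = (\<Sum>x\<in>UNIV. \<Sum>y\<in>UNIV. mc_law \<pi> K t x y * C x y)"

text \<open>Expected discounted cost (linearity / monotone convergence for nonnegative C).\<close>
definition wl_objective :: "real \<Rightarrow> ('a::finite \<Rightarrow> 'b::finite \<Rightarrow> real)
    \<Rightarrow> ('a \<Rightarrow> 'b \<Rightarrow> real) \<Rightarrow> (nat \<Rightarrow> 'a \<Rightarrow> 'b \<Rightarrow> 'a \<Rightarrow> 'b \<Rightarrow> real) \<Rightarrow> enat \<Rightarrow> real" where
  "wl_objective \<delta> C \<pi> K k =
     (case k of enat n \<Rightarrow> (\<Sum>t<n. \<delta> * (1 - \<delta>) ^ t * mc_expect \<pi> K C t)
                          + (1 - \<delta>) ^ n * mc_expect \<pi> K C n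
              | \<infinity> \<Rightarrow> (\<Sum>t. \<delta> * (1 - \<delta>) ^ t * mc_expect \<pi> K C t))"

definition dWL :: "real \<Rightarrow> ('a::finite \<Rightarrow> 'a \<Rightarrow> real) \<Rightarrow> ('a \<Rightarrow> real)
    \<Rightarrow> ('b::finite \<Rightarrow> 'b \<Rightarrow> real) \<Rightarrow> ('b \<Rightarrow> real) \<Rightarrow> ('a \<Rightarrow> 'b \<Rightarrow> real) \<Rightarrow> enat \<Rightarrow> real" where
  "dWL \<delta> mX \<nu>X mY \<nu>Y C k =
     Inf {wl_objective \<delta> C \<pi> K k | \<pi> K. markov_coupling mX \<nu>X mY \<nu>Y \<pi> K}"

end

theory Submission
  imports Defs
begin


lemma inf_img_le:
  fixes f g :: "'p \<Rightarrow> real"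
  assumes "S \<noteq> {}" "bdd_below (f ` S)" "\<And>s. s \<in> S \<Longrightarrow> f s \<le> g s + c"
  shows "Inf (f ` S) \<le> Inf (g ` S) + c"
proof -
  have "Inf (f ` S) - c \<le> Inf (g ` S)"
  proof (rule cInf_greatest)
    show "g ` S \<noteq> {}" using assms(1) by auto
  next
    fix x assume "x \<in> g ` S"
    then obtain s where s: "s \<in> S" "x = g s" by auto
    have "Inf (f ` S) \<le> f s" using assms(2) s(1) by (auto intro: cInf_lower)
    then show "Inf (f ` S) - c \<le> x" using assms(3)[OF s(1)] s(2) by linarith
  qed
  then show ?thesis by linarith
qed

lemma inf_img_abs:
  fixes f g :: "'p \<Rightarrow> real"
  assumes "S \<noteq> {}" "bdd_below (f ` S)" "bdd_below (g ` S)" "\<And>s. s \<in> S \<Longrightarrow> \<bar>f s - g s\<bar> \<le> c"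
  shows "\<bar>Inf (f ` S) - Inf (g ` S)\<bar> \<le> c"
proof -
  have "Inf (f ` S) \<le> Inf (g ` S) + c"
    by (rule inf_img_le[OF assms(1,2)]) (use assms(4) in force)
  moreover have "Inf (g ` S) \<le> Inf (f ` S) + c"
    by (rule inf_img_le[OF assms(1,3)]) (use assms(4) in force)
  ultimately show ?thesis by linarith
qed

lemma coupling_nonempty:
  assumes "prob_vec \<alpha>" "prob_vec \<beta>"
  shows "(\<lambda>i j. \<alpha> i * \<beta> j) \<in> coupling \<alpha> \<beta>"
  using assms unfolding coupling_def prob_vec_def
  by (auto simp: sum_distrib_left[symmetric] sum_distrib_right[symmetric])

lemma coupling_props:
  assumes "prob_vec \<alpha>" "P \<in> coupling \<alpha> \<beta>"
  shows "0 \<le> P i j" "P i j \<le> 1" "(\<Sum>i\<in>UNIV. \<Sum>j\<in>UNIV. P i j) = 1"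
proof -
  show 0: "0 \<le> P i j" using assms by (auto simp: coupling_def)
  have "P i j \<le> (\<Sum>j\<in>UNIV. P i j)"
    by (rule member_le_sum) (use assms in \<open>auto simp: coupling_def\<close>)
  also have "\<dots> = \<alpha> i" using assms by (auto simp: coupling_def)
  also have "\<dots> \<le> (\<Sum>i\<in>UNIV. \<alpha> i)"
    by (rule member_le_sum) (use assms in \<open>auto simp: prob_vec_def\<close>)
  finally show "P i j \<le> 1" using assms by (auto simp: prob_vec_def)
  show "(\<Sum>i\<in>UNIV. \<Sum>j\<in>UNIV. P i j) = 1" using assms by (auto simp: coupling_def prob_vec_def)
qed

lemma xlnx_ge: "0 \<le> (x::real) \<Longrightarrow> x \<le> 1 \<Longrightarrow> -1 \<le> x * ln x"
proof (cases "x = 0")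
  case False
  assume h: "0 \<le> x" "x \<le> 1"
  then have "x > 0" using False by auto
  have "ln (1/x) \<le> 1/x - 1" using \<open>x > 0\<close> by (intro ln_le_minus_one) auto
  then have "- ln x \<le> 1/x - 1" using \<open>x > 0\<close> by (simp add: ln_div)
  then have "x * (- ln x) \<le> x * (1/x - 1)" using \<open>x > 0\<close> by (intro mult_left_mono) auto
  moreover have "x * (1/x - 1) = 1 - x" using \<open>x > 0\<close> by (simp add: field_simps)
  ultimately show ?thesis using h by linarith
qed simp

lemma xlnx_le: "0 \<le> (x::real) \<Longrightarrow> x \<le> 1 \<Longrightarrow> x * ln x \<le> 0"
  by (cases "x = 0") (auto simp: mult_nonneg_nonpos)

definition lin :: "('a::finite \<Rightarrow> 'b::finite \<Rightarrow> real) \<Rightarrow> ('a \<Rightarrow> 'b \<Rightarrow> real) \<Rightarrow> real" where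
  "lin P D = (\<Sum>i\<in>UNIV. \<Sum>j\<in>UNIV. P i j * D i j)"
definition ent :: "('a::finite \<Rightarrow> 'b::finite \<Rightarrow> real) \<Rightarrow> real" where
  "ent P = (\<Sum>i\<in>UNIV. \<Sum>j\<in>UNIV. P i j * ln (P i j))"
definition Nc :: "('a::finite \<Rightarrow> 'b::finite \<Rightarrow> real) \<Rightarrow> real" where
  "Nc P = (\<Sum>i\<in>UNIV. \<Sum>j\<in>UNIV. (1::real))"

lemma ot_eps_alt: "ot_eps \<epsilon> \<alpha> \<beta> D = Inf ((\<lambda>P. lin P D + \<epsilon> * ent P) ` coupling \<alpha> \<beta>)"
  by (simp add: ot_eps_def lin_def ent_def)

lemma ot0_alt: "ot_eps 0 \<alpha> \<beta> D = Inf ((\<lambda>P. lin P D) ` coupling \<alpha> \<beta>)"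
  by (simp add: ot_eps_alt)

lemma ent_bounds:
  fixes P :: "'a::finite \<Rightarrow> 'b::finite \<Rightarrow> real"
  assumes "prob_vec \<alpha>" "P \<in> coupling \<alpha> \<beta>"
  shows "- (real CARD('a) * real CARD('b)) \<le> ent P" "ent P \<le> 0"
proof -
  have "(\<Sum>i\<in>(UNIV::'a set). \<Sum>j\<in>(UNIV::'b set). (-1::real)) \<le> ent P"
    unfolding ent_def
    by (intro sum_mono xlnx_ge) (use coupling_props[OF assms] in auto)
  moreover have "(\<Sum>i\<in>(UNIV::'a set). \<Sum>j\<in>(UNIV::'b set). (-1::real)) = - (real CARD('a) * real CARD('b))"
    by simp
  ultimately show "- (real CARD('a) * real CARD('b)) \<le> ent P"
    by simp
  show "ent P \<le> 0" unfolding ent_def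
    by (intro sum_nonpos xlnx_le) (use coupling_props[OF assms] in auto)
qed

lemma lin_lower:
  assumes "prob_vec \<alpha>" "P \<in> coupling \<alpha> \<beta>"
  shows "- (\<Sum>i\<in>UNIV. \<Sum>j\<in>UNIV. \<bar>D i j\<bar>) \<le> lin P D"
proof -
  have "(\<Sum>i\<in>UNIV. \<Sum>j\<in>UNIV. - \<bar>D i j\<bar>) \<le> lin P D"
    unfolding lin_def
  proof (intro sum_mono)
    fix i j
    have "0 \<le> P i j" "P i j \<le> 1" using coupling_props[OF assms] by auto
    then have "\<bar>P i j * D i j\<bar> \<le> \<bar>D i j\<bar>"
      by (simp add: abs_mult mult_left_le_one_le)
    then show "- \<bar>D i j\<bar> \<le> P i j * D i j" by linarith
  qed
  then show ?thesis by (simp add: sum_negf)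
qed

lemma lin_lip:
  assumes "prob_vec \<alpha>" "P \<in> coupling \<alpha> \<beta>" "\<And>i j. \<bar>D i j - D' i j\<bar> \<le> c"
  shows "\<bar>lin P D - lin P D'\<bar> \<le> c"
proof -
  have "\<bar>lin P D - lin P D'\<bar> = \<bar>\<Sum>i\<in>UNIV. \<Sum>j\<in>UNIV. P i j * (D i j - D' i j)\<bar>"
    by (simp add: lin_def sum_subtractf right_diff_distrib)
  also have "\<dots> \<le> (\<Sum>i\<in>UNIV. \<Sum>j\<in>UNIV. \<bar>P i j * (D i j - D' i j)\<bar>)"
    by (rule order_trans[OF sum_abs]) (intro sum_mono sum_abs)
  also have "\<dots> \<le> (\<Sum>i\<in>UNIV. \<Sum>j\<in>UNIV. P i j * c)"
    using coupling_props[OF assms(1,2)] assms(3)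
    by (intro sum_mono) (simp add: abs_mult mult_left_mono)
  also have "\<dots> = c" using coupling_props(3)[OF assms(1,2)]
    by (simp add: sum_distrib_right[symmetric])
  finally show ?thesis .
qed

lemma ot_bdd:
  assumes "prob_vec \<alpha>" "0 \<le> \<epsilon>"
  shows "bdd_below ((\<lambda>P. lin P D + \<epsilon> * ent P) ` coupling \<alpha> (\<beta>::'b::finite \<Rightarrow> real))"
proof (rule bdd_belowI2)
  fix P assume P: "P \<in> coupling \<alpha> \<beta>"
  have "- (\<Sum>i\<in>UNIV. \<Sum>j\<in>UNIV. \<bar>D i j\<bar>) \<le> lin P D" by (rule lin_lower[OF assms(1) P])
  moreover have "\<epsilon> * (- (real CARD('a) * real CARD('b))) \<le> \<epsilon> * ent P"
    using ent_bounds[OF assms(1) P] assms(2) by (intro mult_left_mono) auto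
  ultimately show "- (\<Sum>i\<in>UNIV. \<Sum>j\<in>UNIV. \<bar>D i j\<bar>) + \<epsilon> * (- (real CARD('a) * real CARD('b))) \<le> lin P D + \<epsilon> * ent P"
    by linarith
qed

lemma ot0_bdd:
  assumes "prob_vec \<alpha>"
  shows "bdd_below ((\<lambda>P. lin P D) ` coupling \<alpha> (\<beta>::'b::finite \<Rightarrow> real))"
  using ot_bdd[OF assms, of 0 D \<beta>] by simp

lemma ot_lip:
  assumes "prob_vec \<alpha>" "prob_vec \<beta>" "0 \<le> \<epsilon>" "\<And>i j. \<bar>D i j - D' i j\<bar> \<le> c"
  shows "\<bar>ot_eps \<epsilon> \<alpha> \<beta> D - ot_eps \<epsilon> \<alpha> \<beta> D'\<bar> \<le> c"
  unfolding ot_eps_alt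
  apply (rule inf_img_abs)
  using coupling_nonempty[OF assms(1,2)] ot_bdd[OF assms(1,3)] lin_lip[OF assms(1) _ assms(4)]
  by auto

lemma ot_eps0:
  fixes \<alpha> :: "'a::finite \<Rightarrow> real"
  assumes "prob_vec \<alpha>" "prob_vec (\<beta>::'b::finite \<Rightarrow> real)" "0 \<le> \<epsilon>"
  shows "\<bar>ot_eps \<epsilon> \<alpha> \<beta> D - ot_eps 0 \<alpha> \<beta> D\<bar> \<le> \<epsilon> * (real CARD('a) * real CARD('b))"
  unfolding ot_eps_alt
proof (rule inf_img_abs)
  fix P assume P: "P \<in> coupling \<alpha> \<beta>"
  have "\<bar>ent P\<bar> \<le> real CARD('a) * real CARD('b)"
    using ent_bounds[OF assms(1) P] by linarith
  then have "\<bar>\<epsilon> * ent P\<bar> \<le> \<epsilon> * (real CARD('a) * real CARD('b))"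
    using assms(3) by (simp add: abs_mult mult_left_mono)
  then show "\<bar>lin P D + \<epsilon> * ent P - (lin P D + 0 * ent P)\<bar> \<le> \<epsilon> * (real CARD('a) * real CARD('b))"
    by simp
qed (use coupling_nonempty[OF assms(1,2)] ot_bdd[OF assms(1,3)] ot_bdd[OF assms(1), of 0] in auto)

lemma ot0_le:
  assumes "prob_vec \<alpha>" "P \<in> coupling \<alpha> \<beta>"
  shows "ot_eps 0 \<alpha> \<beta> D \<le> lin P D"
  unfolding ot0_alt by (rule cInf_lower) (use assms ot0_bdd[OF assms(1)] in auto)

lemma ot0_approx:
  assumes "prob_vec \<alpha>" "prob_vec \<beta>" "0 < \<eta>"
  shows "\<exists>P\<in>coupling \<alpha> \<beta>. lin P D < ot_eps 0 \<alpha> \<beta> D + \<eta>"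
proof -
  have "Inf ((\<lambda>P. lin P D) ` coupling \<alpha> \<beta>) < ot_eps 0 \<alpha> \<beta> D + \<eta>"
    using assms(3) by (simp add: ot0_alt)
  then show ?thesis
    using cInf_less_iff[of "(\<lambda>P. lin P D) ` coupling \<alpha> \<beta>"] coupling_nonempty[OF assms(1,2)] ot0_bdd[OF assms(1), of D \<beta>]
    by blast
qed


lemma sum4_swap:
  fixes f :: "'a::finite \<Rightarrow> 'b::finite \<Rightarrow> 'c::finite \<Rightarrow> 'd::finite \<Rightarrow> real"
  shows "(\<Sum>a\<in>UNIV. \<Sum>b\<in>UNIV. \<Sum>c\<in>UNIV. \<Sum>d\<in>UNIV. f a b c d) = (\<Sum>c\<in>UNIV. \<Sum>d\<in>UNIV. \<Sum>a\<in>UNIV. \<Sum>b\<in>UNIV. f a b c d)"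
proof -
  have "(\<Sum>a\<in>UNIV. \<Sum>b\<in>UNIV. \<Sum>c\<in>UNIV. \<Sum>d\<in>UNIV. f a b c d) = (\<Sum>a\<in>UNIV. \<Sum>c\<in>UNIV. \<Sum>b\<in>UNIV. \<Sum>d\<in>UNIV. f a b c d)"
    by (rule sum.cong[OF refl]) (rule sum.swap)
  also have "\<dots> = (\<Sum>c\<in>UNIV. \<Sum>a\<in>UNIV. \<Sum>b\<in>UNIV. \<Sum>d\<in>UNIV. f a b c d)" by (rule sum.swap)
  also have "\<dots> = (\<Sum>c\<in>UNIV. \<Sum>a\<in>UNIV. \<Sum>d\<in>UNIV. \<Sum>b\<in>UNIV. f a b c d)"
    by (intro sum.cong[OF refl]) (rule sum.swap)
  also have "\<dots> = (\<Sum>c\<in>UNIV. \<Sum>d\<in>UNIV. \<Sum>a\<in>UNIV. \<Sum>b\<in>UNIV. f a b c d)"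
    by (intro sum.cong[OF refl]) (rule sum.swap)
  finally show ?thesis .
qed


definition step :: "('a::finite \<Rightarrow> 'b::finite \<Rightarrow> real) \<Rightarrow> ('a \<Rightarrow> 'b \<Rightarrow> 'a \<Rightarrow> 'b \<Rightarrow> real) \<Rightarrow> 'a \<Rightarrow> 'b \<Rightarrow> real" where
  "step \<pi> Kt = (\<lambda>x' y'. \<Sum>x\<in>UNIV. \<Sum>y\<in>UNIV. \<pi> x y * Kt x y x' y')"

definition kvalid :: "('a::finite \<Rightarrow> 'a \<Rightarrow> real) \<Rightarrow> ('b::finite \<Rightarrow> 'b \<Rightarrow> real) \<Rightarrow> (nat \<Rightarrow> 'a \<Rightarrow> 'b \<Rightarrow> 'a \<Rightarrow> 'b \<Rightarrow> real) \<Rightarrow> bool" where "kvalid mX mY K \<longleftrightarrow> (\<forall>t x y. K t x y \<in> coupling (mX x) (mY y))"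

definition obj :: "real \<Rightarrow> ('a::finite \<Rightarrow> 'b::finite \<Rightarrow> real) \<Rightarrow> nat \<Rightarrow> ('a \<Rightarrow> 'b \<Rightarrow> real) \<Rightarrow> (nat \<Rightarrow> 'a \<Rightarrow> 'b \<Rightarrow> 'a \<Rightarrow> 'b \<Rightarrow> real) \<Rightarrow> real" where
  "obj \<delta> C n \<pi> K = (\<Sum>t<n. \<delta> * (1 - \<delta>) ^ t * lin (mc_law \<pi> K t) C) + (1 - \<delta>) ^ n * lin (mc_law \<pi> K n) C"

lemma wl_obj_fin: "wl_objective \<delta> C \<pi> K (enat n) = obj \<delta> C n \<pi> K"
  by (simp add: wl_objective_def obj_def mc_expect_def lin_def)

lemma mc_law_Suc': "mc_law \<pi> K (Suc t) = step (mc_law \<pi> K t) (K t)"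
  by (simp add: step_def)

declare mc_law.simps(2)[simp del]

lemma mc_shift: "mc_law \<pi> K (Suc t) = mc_law (step \<pi> (K 0)) (\<lambda>t. K (Suc t)) t"
  by (induction t) (simp_all add: mc_law_Suc')

lemma lin_step: "lin (step \<pi> Kt) D = (\<Sum>x\<in>UNIV. \<Sum>y\<in>UNIV. \<pi> x y * lin (Kt x y) D)"
proof -
  have "lin (step \<pi> Kt) D = (\<Sum>x'\<in>UNIV. \<Sum>y'\<in>UNIV. \<Sum>x\<in>UNIV. \<Sum>y\<in>UNIV. \<pi> x y * Kt x y x' y' * D x' y')"
    by (simp add: lin_def step_def sum_distrib_right)
  also have "\<dots> = (\<Sum>x\<in>UNIV. \<Sum>y\<in>UNIV. \<Sum>x'\<in>UNIV. \<Sum>y'\<in>UNIV. \<pi> x y * Kt x y x' y' * D x' y')"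
    by (rule sum4_swap)
  also have "\<dots> = (\<Sum>x\<in>UNIV. \<Sum>y\<in>UNIV. \<pi> x y * lin (Kt x y) D)"
    by (simp add: lin_def sum_distrib_left mult.assoc)
  finally show ?thesis .
qed

lemma lin_one: "lin P (\<lambda>_ _. 1) = (\<Sum>i\<in>UNIV. \<Sum>j\<in>UNIV. P i j)"
  by (simp add: lin_def)

lemma obj_Suc: "obj \<delta> C (Suc n) \<pi> K = \<delta> * lin \<pi> C + (1 - \<delta>) * obj \<delta> C n (step \<pi> (K 0)) (\<lambda>t. K (Suc t))"
proof -
  let ?L = "\<lambda>t. lin (mc_law \<pi> K t) C"
  let ?L' = "\<lambda>t. lin (mc_law (step \<pi> (K 0)) (\<lambda>t. K (Suc t)) t) C"
  have s: "?L (Suc t) = ?L' t" for t by (simp only: mc_shift)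
  have "obj \<delta> C (Suc n) \<pi> K = \<delta> * (1 - \<delta>) ^ 0 * ?L 0 + (\<Sum>t<n. \<delta> * (1 - \<delta>) ^ Suc t * ?L (Suc t)) + (1 - \<delta>) ^ Suc n * ?L (Suc n)"
    unfolding obj_def by (simp only: sum.lessThan_Suc_shift)
  also have "\<dots> = \<delta> * lin \<pi> C + (1 - \<delta>) * ((\<Sum>t<n. \<delta> * (1 - \<delta>) ^ t * ?L' t) + (1 - \<delta>) ^ n * ?L' n)"
    by (simp add: s sum_distrib_left algebra_simps)
  also have "\<dots> = \<delta> * lin \<pi> C + (1 - \<delta>) * obj \<delta> C n (step \<pi> (K 0)) (\<lambda>t. K (Suc t))"
    by (simp add: obj_def)
  finally show ?thesis .
qed

locale wlc =
  fixes mX :: "'x::finite \<Rightarrow> 'x \<Rightarrow> real" and \<nu>X :: "'x \<Rightarrow> real"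
    and mY :: "'y::finite \<Rightarrow> 'y \<Rightarrow> real" and \<nu>Y :: "'y \<Rightarrow> real"
    and C :: "'x \<Rightarrow> 'y \<Rightarrow> real" and \<delta> :: real
  assumes mX: "markov_kernel mX" and nX: "prob_vec \<nu>X"
    and mY: "markov_kernel mY" and nY: "prob_vec \<nu>Y"
    and Cnn: "\<forall>x y. 0 \<le> C x y"
    and d0: "0 < \<delta>" and d1: "\<delta> \<le> 1"
begin

lemma mXp: "prob_vec (mX x)" using mX by (simp add: markov_kernel_def)
lemma mYp: "prob_vec (mY y)" using mY by (simp add: markov_kernel_def)

lemma step_nonneg:
  assumes "\<And>x y. 0 \<le> \<pi> x y" "\<And>x y. Kt x y \<in> coupling (mX x) (mY y)"
  shows "0 \<le> step \<pi> Kt x' y'"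
  unfolding step_def using assms
  by (intro sum_nonneg mult_nonneg_nonneg) (auto simp: coupling_def)

lemma step_mass:
  assumes "\<And>x y. Kt x y \<in> coupling (mX x) (mY y)"
  shows "(\<Sum>i\<in>UNIV. \<Sum>j\<in>UNIV. step \<pi> Kt i j) = (\<Sum>i\<in>UNIV. \<Sum>j\<in>UNIV. \<pi> i j)"
  using lin_step[of \<pi> Kt "\<lambda>_ _. 1"] coupling_props(3)[OF mXp assms]
  by (simp add: lin_one)

lemma kvalid_ex: "\<exists>K. kvalid mX mY K"
  by (rule exI[of _ "\<lambda>t x y i j. mX x i * mY y j"]) (use coupling_nonempty[OF mXp mYp] in \<open>simp add: kvalid_def\<close>)

abbreviation W where "W n \<equiv> wl_cost 0 \<delta> mX mY C n"

lemma LB: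
  assumes "kvalid mX mY K" "\<And>i j. 0 \<le> \<pi> i j"
  shows "lin \<pi> (W n) \<le> obj \<delta> C n \<pi> K"
  using assms
proof (induction n arbitrary: \<pi> K)
  case 0
  then show ?case by (simp add: obj_def)
next
  case (Suc n)
  let ?\<pi>1 = "step \<pi> (K 0)"
  have v: "kvalid mX mY (\<lambda>t. K (Suc t))" using Suc.prems(1) by (simp add: kvalid_def)
  have nn: "\<And>i j. 0 \<le> ?\<pi>1 i j"
    using Suc.prems by (intro step_nonneg) (auto simp: kvalid_def)
  have IH: "lin ?\<pi>1 (W n) \<le> obj \<delta> C n ?\<pi>1 (\<lambda>t. K (Suc t))"
    by (rule Suc.IH[OF v nn])
  have "lin ?\<pi>1 (W n) = (\<Sum>x\<in>UNIV. \<Sum>y\<in>UNIV. \<pi> x y * lin (K 0 x y) (W n))"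
    by (rule lin_step)
  also have "\<dots> \<ge> (\<Sum>x\<in>UNIV. \<Sum>y\<in>UNIV. \<pi> x y * ot_eps 0 (mX x) (mY y) (W n))"
    using Suc.prems by (intro sum_mono mult_left_mono) (auto simp: kvalid_def intro!: ot0_le[OF mXp])
  finally have A: "(\<Sum>x\<in>UNIV. \<Sum>y\<in>UNIV. \<pi> x y * ot_eps 0 (mX x) (mY y) (W n)) \<le> lin ?\<pi>1 (W n)" .
  have "lin \<pi> (W (Suc n)) = \<delta> * lin \<pi> C + (1 - \<delta>) * (\<Sum>x\<in>UNIV. \<Sum>y\<in>UNIV. \<pi> x y * ot_eps 0 (mX x) (mY y) (W n))"
    unfolding lin_def sum_distrib_left sum.distrib[symmetric] by (simp add: algebra_simps)
  also have "\<dots> \<le> \<delta> * lin \<pi> C + (1 - \<delta>) * obj \<delta> C n ?\<pi>1 (\<lambda>t. K (Suc t))"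
    using A IH d1 by (intro add_left_mono mult_left_mono) auto
  also have "\<dots> = obj \<delta> C (Suc n) \<pi> K" by (simp add: obj_Suc)
  finally show ?case .
qed

lemma lin_W_Suc: "lin \<pi> (W (Suc n)) = \<delta> * lin \<pi> C + (1 - \<delta>) * (\<Sum>x\<in>UNIV. \<Sum>y\<in>UNIV. \<pi> x y * ot_eps 0 (mX x) (mY y) (W n))"
  unfolding lin_def sum_distrib_left sum.distrib[symmetric] by (simp add: algebra_simps)

lemma UB:
  assumes "0 < \<eta>"
  shows "\<exists>K. kvalid mX mY K \<and> (\<forall>\<pi>. (\<forall>i j. 0 \<le> \<pi> i j) \<longrightarrow> (\<Sum>i\<in>UNIV. \<Sum>j\<in>UNIV. \<pi> i j) = 1 \<longrightarrow> obj \<delta> C n \<pi> K \<le> lin \<pi> (W n) + \<eta>)"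
  using assms
proof (induction n arbitrary: \<eta>)
  case 0
  obtain K where "kvalid mX mY K" using kvalid_ex by blast
  moreover have "obj \<delta> C 0 \<pi> K \<le> lin \<pi> (W 0) + \<eta>" for \<pi>
    using 0 by (simp add: obj_def)
  ultimately show ?case by blast
next
  case (Suc n)
  obtain K' where K': "kvalid mX mY K'"
    "\<And>\<pi>. (\<forall>i j. 0 \<le> \<pi> i j) \<Longrightarrow> (\<Sum>i\<in>UNIV. \<Sum>j\<in>UNIV. \<pi> i j) = 1 \<Longrightarrow> obj \<delta> C n \<pi> K' \<le> lin \<pi> (W n) + \<eta>/2"
    using Suc.IH[of "\<eta>/2"] Suc.prems by auto
  have ex: "\<forall>x. \<forall>y. \<exists>P. P \<in> coupling (mX x) (mY y) \<and> lin P (W n) < ot_eps 0 (mX x) (mY y) (W n) + \<eta>/2"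
    using ot0_approx[OF mXp mYp, of "\<eta>/2"] Suc.prems by force
  then have "\<forall>x. \<exists>g. \<forall>y. g y \<in> coupling (mX x) (mY y) \<and> lin (g y) (W n) < ot_eps 0 (mX x) (mY y) (W n) + \<eta>/2"
    by (meson choice)
  then obtain K0 where K0: "\<And>x y. K0 x y \<in> coupling (mX x) (mY y)"
    "\<And>x y. lin (K0 x y) (W n) < ot_eps 0 (mX x) (mY y) (W n) + \<eta>/2"
    by (metis choice)
  define K where "K = (\<lambda>t. case t of 0 \<Rightarrow> K0 | Suc t' \<Rightarrow> K' t')"
  have K0eq: "K 0 = K0" and K'eq: "(\<lambda>t. K (Suc t)) = K'" by (auto simp: K_def)
  have Kv: "kvalid mX mY K" using K0(1) K'(1) by (auto simp: kvalid_def K_def split: nat.splits)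
  show ?case
  proof (intro exI[of _ K] conjI Kv allI impI)
    fix \<pi> :: "'x \<Rightarrow> 'y \<Rightarrow> real"
    assume nn: "\<forall>i j. 0 \<le> \<pi> i j" and ms: "(\<Sum>i\<in>UNIV. \<Sum>j\<in>UNIV. \<pi> i j) = 1"
    let ?\<pi>1 = "step \<pi> K0"
    have nn1: "\<forall>i j. 0 \<le> ?\<pi>1 i j" using nn K0(1) by (auto intro!: step_nonneg)
    have ms1: "(\<Sum>i\<in>UNIV. \<Sum>j\<in>UNIV. ?\<pi>1 i j) = 1" using step_mass[OF K0(1)] ms by simp
    have "lin ?\<pi>1 (W n) = (\<Sum>x\<in>UNIV. \<Sum>y\<in>UNIV. \<pi> x y * lin (K0 x y) (W n))"
      by (rule lin_step)
    also have "\<dots> \<le> (\<Sum>x\<in>UNIV. \<Sum>y\<in>UNIV. \<pi> x y * (ot_eps 0 (mX x) (mY y) (W n) + \<eta>/2))"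
      using nn K0(2) by (intro sum_mono mult_left_mono) (auto intro: less_imp_le)
    also have "\<dots> = (\<Sum>x\<in>UNIV. \<Sum>y\<in>UNIV. \<pi> x y * ot_eps 0 (mX x) (mY y) (W n)) + \<eta>/2 * (\<Sum>i\<in>UNIV. \<Sum>j\<in>UNIV. \<pi> i j)"
      by (simp add: ring_distribs sum.distrib sum_distrib_left sum_divide_distrib mult.commute)
    finally have A: "lin ?\<pi>1 (W n) \<le> (\<Sum>x\<in>UNIV. \<Sum>y\<in>UNIV. \<pi> x y * ot_eps 0 (mX x) (mY y) (W n)) + \<eta>/2"
      using ms by simp
    have "obj \<delta> C (Suc n) \<pi> K = \<delta> * lin \<pi> C + (1 - \<delta>) * obj \<delta> C n ?\<pi>1 K'"
      using obj_Suc[of \<delta> C n \<pi> K] K0eq K'eq by simp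
    also have "\<dots> \<le> \<delta> * lin \<pi> C + (1 - \<delta>) * (lin ?\<pi>1 (W n) + \<eta>/2)"
      using K'(2)[OF nn1 ms1] d1 by (intro add_left_mono mult_left_mono) auto
    also have "\<dots> \<le> \<delta> * lin \<pi> C + (1 - \<delta>) * ((\<Sum>x\<in>UNIV. \<Sum>y\<in>UNIV. \<pi> x y * ot_eps 0 (mX x) (mY y) (W n)) + \<eta>)"
      using A d1 Suc.prems by (intro add_left_mono mult_left_mono) auto
    also have "\<dots> = lin \<pi> (W (Suc n)) + (1 - \<delta>) * \<eta>"
      by (simp add: lin_W_Suc ring_distribs del: wl_cost.simps)
    also have "\<dots> \<le> lin \<pi> (W (Suc n)) + \<eta>"
      using d0 Suc.prems by (simp add: mult_left_le_one_le)
    finally show "obj \<delta> C (Suc n) \<pi> K \<le> lin \<pi> (W (Suc n)) + \<eta>" .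
  qed
qed

lemma dWL_set: "{wl_objective \<delta> C \<pi> K k | \<pi> K. markov_coupling mX \<nu>X mY \<nu>Y \<pi> K}
   = (\<lambda>pk. wl_objective \<delta> C (fst pk) (snd pk) k) ` {pk. fst pk \<in> coupling \<nu>X \<nu>Y \<and> kvalid mX mY (snd pk)}"
  by (auto simp: markov_coupling_def kvalid_def image_def)

lemma MC_nonempty: "{pk. fst pk \<in> coupling \<nu>X \<nu>Y \<and> kvalid mX mY (snd pk)} \<noteq> {}"
  using coupling_nonempty[OF nX nY] kvalid_ex by auto

lemma dWL_fin: "dWL \<delta> mX \<nu>X mY \<nu>Y C (enat n) = ot_eps 0 \<nu>X \<nu>Y (W n)"
proof -
  let ?M = "{pk. fst pk \<in> coupling \<nu>X \<nu>Y \<and> kvalid mX mY (snd pk)}"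
  let ?f = "\<lambda>pk. obj \<delta> C n (fst pk) (snd pk)"
  have eq: "dWL \<delta> mX \<nu>X mY \<nu>Y C (enat n) = Inf (?f ` ?M)"
    unfolding dWL_def dWL_set by (simp add: wl_obj_fin)
  have lb: "ot_eps 0 \<nu>X \<nu>Y (W n) \<le> ?f pk" if "pk \<in> ?M" for pk
  proof -
    have "ot_eps 0 \<nu>X \<nu>Y (W n) \<le> lin (fst pk) (W n)" using that by (intro ot0_le[OF nX]) auto
    also have "\<dots> \<le> ?f pk" using that by (intro LB) (auto simp: coupling_def)
    finally show ?thesis .
  qed
  have bdd: "bdd_below (?f ` ?M)"
    by (rule bdd_belowI2[of _ "ot_eps 0 \<nu>X \<nu>Y (W n)"]) (use lb in auto)
  have ge: "ot_eps 0 \<nu>X \<nu>Y (W n) \<le> Inf (?f ` ?M)"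
    using MC_nonempty lb by (intro cInf_greatest) auto
  have le: "Inf (?f ` ?M) \<le> ot_eps 0 \<nu>X \<nu>Y (W n)"
  proof (rule field_le_epsilon)
    fix e :: real assume e: "0 < e"
    obtain K where K: "kvalid mX mY K"
      "\<And>\<pi>. (\<forall>i j. 0 \<le> \<pi> i j) \<Longrightarrow> (\<Sum>i\<in>UNIV. \<Sum>j\<in>UNIV. \<pi> i j) = 1 \<Longrightarrow> obj \<delta> C n \<pi> K \<le> lin \<pi> (W n) + e/2"
      using UB[of "e/2" n] e by auto
    obtain \<pi> where \<pi>: "\<pi> \<in> coupling \<nu>X \<nu>Y" "lin \<pi> (W n) < ot_eps 0 \<nu>X \<nu>Y (W n) + e/2"
      using ot0_approx[OF nX nY, of "e/2"] e by auto
    have "Inf (?f ` ?M) \<le> ?f (\<pi>, K)"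
      using \<pi>(1) K(1) bdd by (intro cInf_lower) (auto simp: image_def intro!: bexI[of _ "(\<pi>, K)"])
    also have "\<dots> \<le> lin \<pi> (W n) + e/2"
      using K(2)[of \<pi>] coupling_props[OF nX \<pi>(1)] by auto
    finally show "Inf (?f ` ?M) \<le> ot_eps 0 \<nu>X \<nu>Y (W n) + e" using \<pi>(2) by linarith
  qed
  show ?thesis using eq ge le by linarith
qed


lemma W_err:
  assumes e: "0 \<le> \<epsilon>"
  shows "\<bar>wl_cost \<epsilon> \<delta> mX mY C n i j - W n i j\<bar> \<le> \<epsilon> * (real CARD('x) * real CARD('y)) / \<delta>"
proof (induction n arbitrary: i j)
  case 0
  then show ?case using e d0 by simp
next
  case (Suc n)
  let ?a = "\<epsilon> * (real CARD('x) * real CARD('y))"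
  have a0: "0 \<le> ?a" using e by simp
  have l1: "\<bar>ot_eps \<epsilon> (mX i) (mY j) (wl_cost \<epsilon> \<delta> mX mY C n) - ot_eps \<epsilon> (mX i) (mY j) (W n)\<bar> \<le> ?a / \<delta>"
    by (rule ot_lip[OF mXp mYp e]) (use Suc.IH in simp)
  have l2: "\<bar>ot_eps \<epsilon> (mX i) (mY j) (W n) - ot_eps 0 (mX i) (mY j) (W n)\<bar> \<le> ?a"
    by (rule ot_eps0[OF mXp mYp e])
  have "\<bar>wl_cost \<epsilon> \<delta> mX mY C (Suc n) i j - W (Suc n) i j\<bar>
      = (1 - \<delta>) * \<bar>ot_eps \<epsilon> (mX i) (mY j) (wl_cost \<epsilon> \<delta> mX mY C n) - ot_eps 0 (mX i) (mY j) (W n)\<bar>"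
    using d1 by (simp add: right_diff_distrib[symmetric] abs_mult)
  also have "\<dots> \<le> (1 - \<delta>) * (?a / \<delta> + ?a)"
    using l1 l2 d1 by (intro mult_left_mono) auto
  also have "(1 - \<delta>) * (?a / \<delta> + ?a) = ?a / \<delta> - ?a * \<delta>"
    using d0 by (simp add: field_simps)
  also have "\<dots> \<le> ?a / \<delta>" using a0 d0 by simp
  finally show ?case by simp
qed

lemma dfin_err:
  assumes e: "0 \<le> \<epsilon>"
  shows "\<bar>dWL_eps_fin \<epsilon> \<delta> mX \<nu>X mY \<nu>Y C n - dWL_eps_fin 0 \<delta> mX \<nu>X mY \<nu>Y C n\<bar> \<le> \<epsilon> * (real CARD('x) * real CARD('y)) / \<delta> + \<epsilon> * (real CARD('x) * real CARD('y))"
proof -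
  have l1: "\<bar>ot_eps \<epsilon> \<nu>X \<nu>Y (wl_cost \<epsilon> \<delta> mX mY C n) - ot_eps \<epsilon> \<nu>X \<nu>Y (W n)\<bar> \<le> \<epsilon> * (real CARD('x) * real CARD('y)) / \<delta>"
    by (rule ot_lip[OF nX nY e]) (use W_err[OF e] in simp)
  have l2: "\<bar>ot_eps \<epsilon> \<nu>X \<nu>Y (W n) - ot_eps 0 \<nu>X \<nu>Y (W n)\<bar> \<le> \<epsilon> * (real CARD('x) * real CARD('y))"
    by (rule ot_eps0[OF nX nY e])
  show ?thesis using l1 l2 unfolding dWL_eps_fin_def by linarith
qed

lemma W_contr:
  assumes e: "0 \<le> \<epsilon>"
  shows "\<bar>wl_cost \<epsilon> \<delta> mX mY C (Suc n) i j - wl_cost \<epsilon> \<delta> mX mY C n i j\<bar>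
     \<le> (1 - \<delta>) ^ n * (\<Sum>a\<in>UNIV. \<Sum>b\<in>UNIV. \<bar>wl_cost \<epsilon> \<delta> mX mY C 1 a b - wl_cost \<epsilon> \<delta> mX mY C 0 a b\<bar>)"
proof (induction n arbitrary: i j)
  case 0
  have "\<bar>wl_cost \<epsilon> \<delta> mX mY C 1 i j - wl_cost \<epsilon> \<delta> mX mY C 0 i j\<bar> \<le> (\<Sum>b\<in>UNIV. \<bar>wl_cost \<epsilon> \<delta> mX mY C 1 i b - wl_cost \<epsilon> \<delta> mX mY C 0 i b\<bar>)"
    by (rule member_le_sum) auto
  also have "\<dots> \<le> (\<Sum>a\<in>UNIV. \<Sum>b\<in>UNIV. \<bar>wl_cost \<epsilon> \<delta> mX mY C 1 a b - wl_cost \<epsilon> \<delta> mX mY C 0 a b\<bar>)"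
    by (rule member_le_sum[of _ _ "\<lambda>a. \<Sum>b\<in>UNIV. \<bar>wl_cost \<epsilon> \<delta> mX mY C 1 a b - wl_cost \<epsilon> \<delta> mX mY C 0 a b\<bar>"]) (auto intro: sum_nonneg)
  finally show ?case by (simp del: wl_cost.simps)
next
  case (Suc n)
  let ?R = "(\<Sum>a\<in>UNIV. \<Sum>b\<in>UNIV. \<bar>wl_cost \<epsilon> \<delta> mX mY C 1 a b - wl_cost \<epsilon> \<delta> mX mY C 0 a b\<bar>)"
  have l1: "\<bar>ot_eps \<epsilon> (mX i) (mY j) (wl_cost \<epsilon> \<delta> mX mY C (Suc n)) - ot_eps \<epsilon> (mX i) (mY j) (wl_cost \<epsilon> \<delta> mX mY C n)\<bar> \<le> (1 - \<delta>) ^ n * ?R"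
    by (rule ot_lip[OF mXp mYp e]) (use Suc.IH in \<open>simp del: wl_cost.simps\<close>)
  have "\<bar>wl_cost \<epsilon> \<delta> mX mY C (Suc (Suc n)) i j - wl_cost \<epsilon> \<delta> mX mY C (Suc n) i j\<bar>
     = (1 - \<delta>) * \<bar>ot_eps \<epsilon> (mX i) (mY j) (wl_cost \<epsilon> \<delta> mX mY C (Suc n)) - ot_eps \<epsilon> (mX i) (mY j) (wl_cost \<epsilon> \<delta> mX mY C n)\<bar>"
    using d1 by (simp only: wl_cost.simps(2)) (simp add: right_diff_distrib[symmetric] abs_mult)
  also have "\<dots> \<le> (1 - \<delta>) * ((1 - \<delta>) ^ n * ?R)"
    using l1 d1 by (intro mult_left_mono) auto
  finally show ?case by simp
qed

lemma conv_geom: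
  fixes a :: "nat \<Rightarrow> real"
  assumes "\<And>n. \<bar>a (Suc n) - a n\<bar> \<le> R * q ^ n" "0 \<le> q" "q < 1"
  shows "convergent a"
proof -
  have "summable (\<lambda>n. R * q ^ n)" using assms by (intro summable_mult summable_geometric) auto
  then have "summable (\<lambda>n. a (Suc n) - a n)"
    by (rule summable_comparison_test[rotated]) (use assms(1) in auto)
  then have "(\<lambda>n. \<Sum>i<n. a (Suc i) - a i) \<longlonglongrightarrow> (\<Sum>n. a (Suc n) - a n)"
    by (rule summable_LIMSEQ)
  then have "(\<lambda>n. a n - a 0) \<longlonglongrightarrow> (\<Sum>n. a (Suc n) - a n)"
    by (simp add: sum_lessThan_telescope)
  then have "(\<lambda>n. a n - a 0 + a 0) \<longlonglongrightarrow> (\<Sum>n. a (Suc n) - a n) + a 0"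
    by (intro tendsto_intros)
  then show ?thesis unfolding convergent_def by auto
qed

lemma deps_conv:
  assumes e: "0 \<le> \<epsilon>"
  shows "convergent (\<lambda>n. dWL_eps_fin \<epsilon> \<delta> mX \<nu>X mY \<nu>Y C n)"
proof (rule conv_geom)
  fix n
  let ?R = "(\<Sum>a\<in>UNIV. \<Sum>b\<in>UNIV. \<bar>wl_cost \<epsilon> \<delta> mX mY C 1 a b - wl_cost \<epsilon> \<delta> mX mY C 0 a b\<bar>)"
  show "\<bar>dWL_eps_fin \<epsilon> \<delta> mX \<nu>X mY \<nu>Y C (Suc n) - dWL_eps_fin \<epsilon> \<delta> mX \<nu>X mY \<nu>Y C n\<bar> \<le> ?R * (1 - \<delta>) ^ n"
    unfolding dWL_eps_fin_def
    by (rule ot_lip[OF nX nY e]) (use W_contr[OF e] in \<open>simp add: mult.commute del: wl_cost.simps\<close>)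
qed (use d0 d1 in auto)

lemma le_one_of_mass:
  fixes P :: "'a::finite \<Rightarrow> 'b::finite \<Rightarrow> real"
  assumes "\<forall>i j. 0 \<le> P i j" "(\<Sum>i\<in>UNIV. \<Sum>j\<in>UNIV. P i j) = (1::real)"
  shows "P i j \<le> 1"
proof -
  have "P i j \<le> (\<Sum>j\<in>UNIV. P i j)" by (rule member_le_sum) (use assms in auto)
  also have "\<dots> \<le> (\<Sum>i\<in>UNIV. \<Sum>j\<in>UNIV. P i j)"
    by (rule member_le_sum[of _ _ "\<lambda>i. \<Sum>j\<in>UNIV. P i j"]) (use assms in \<open>auto intro: sum_nonneg\<close>)
  finally show ?thesis using assms by simp
qed

lemma mc_law_props:
  assumes "\<forall>i j. 0 \<le> \<pi> i j" "(\<Sum>i\<in>UNIV. \<Sum>j\<in>UNIV. \<pi> i j) = 1" "kvalid mX mY K"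
  shows "(\<forall>i j. 0 \<le> mc_law \<pi> K t i j) \<and> (\<Sum>i\<in>UNIV. \<Sum>j\<in>UNIV. mc_law \<pi> K t i j) = 1"
proof (induction t)
  case 0
  then show ?case using assms by simp
next
  case (Suc t)
  have K: "\<And>x y. K t x y \<in> coupling (mX x) (mY y)" using assms(3) by (simp add: kvalid_def)
  show ?case unfolding mc_law_Suc'
    using Suc step_mass[OF K] step_nonneg[OF _ K] by simp
qed

abbreviation Mc where "Mc \<equiv> (\<Sum>i\<in>UNIV. \<Sum>j\<in>UNIV. C i j)"

lemma E_bounds:
  assumes "\<forall>i j. 0 \<le> P i j" "(\<Sum>i\<in>UNIV. \<Sum>j\<in>UNIV. P i j) = 1"
  shows "0 \<le> lin P C" "lin P C \<le> Mc"
proof -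
  show "0 \<le> lin P C" unfolding lin_def using assms Cnn by (intro sum_nonneg mult_nonneg_nonneg) auto
  show "lin P C \<le> Mc" unfolding lin_def
    using le_one_of_mass[OF assms] assms Cnn by (intro sum_mono mult_left_le_one_le) auto
qed

end

lemma tail_bound:
  fixes E :: "nat \<Rightarrow> real"
  assumes d0: "0 < \<delta>" and d1: "\<delta> \<le> 1" and E: "\<And>t. 0 \<le> E t" "\<And>t. E t \<le> M"
  shows "\<bar>(\<Sum>t<n. \<delta> * (1 - \<delta>) ^ t * E t) + (1 - \<delta>) ^ n * E n - (\<Sum>t. \<delta> * (1 - \<delta>) ^ t * E t)\<bar> \<le> (1 - \<delta>) ^ n * M"
proof -
  let ?f = "\<lambda>t. \<delta> * (1 - \<delta>) ^ t * E t"
  have q: "norm (1 - \<delta>) < 1" using d0 d1 by auto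
  have M0: "0 \<le> M" using E[of 0] by linarith
  have sg: "summable (\<lambda>t. (1 - \<delta>) ^ t)" by (rule summable_geometric[OF q])
  have sg2: "summable (\<lambda>t. (\<delta> * (1 - \<delta>) ^ n * M) * (1 - \<delta>) ^ t)" by (rule summable_mult[OF sg])
  have fle: "?f t \<le> \<delta> * (1 - \<delta>) ^ t * M" for t
    using E d0 d1 by (intro mult_left_mono) auto
  have f0: "0 \<le> ?f t" for t using E d0 d1 by auto
  have "summable (\<lambda>t. \<delta> * (1 - \<delta>) ^ t * M)"
    using summable_mult[OF sg, of "\<delta> * M"] by (simp add: algebra_simps)
  then have sf: "summable ?f"
    by (rule summable_comparison_test[rotated]) (use fle f0 in auto)
  have split: "suminf ?f = (\<Sum>t. ?f (t + n)) + (\<Sum>t<n. ?f t)"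
    by (rule suminf_split_initial_segment[OF sf])
  have st: "summable (\<lambda>t. ?f (t + n))" by (rule summable_ignore_initial_segment[OF sf])
  have T0: "0 \<le> (\<Sum>t. ?f (t + n))" by (rule suminf_nonneg[OF st]) (use f0 in auto)
  have "(\<Sum>t. ?f (t + n)) \<le> (\<Sum>t. (\<delta> * (1 - \<delta>) ^ n * M) * (1 - \<delta>) ^ t)"
  proof (rule suminf_le[OF _ st sg2])
    fix t show "?f (t + n) \<le> (\<delta> * (1 - \<delta>) ^ n * M) * (1 - \<delta>) ^ t"
      using fle[of "t + n"] by (simp add: power_add algebra_simps)
  qed
  also have "\<dots> = (\<delta> * (1 - \<delta>) ^ n * M) * (1 / (1 - (1 - \<delta>)))"
    by (simp add: suminf_mult[OF sg] suminf_geometric[OF q])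
  also have "\<dots> = (1 - \<delta>) ^ n * M" using d0 by simp
  finally have T1: "(\<Sum>t. ?f (t + n)) \<le> (1 - \<delta>) ^ n * M" .
  have P0: "0 \<le> (1 - \<delta>) ^ n * E n" using E d1 by auto
  have P1: "(1 - \<delta>) ^ n * E n \<le> (1 - \<delta>) ^ n * M" using E d1 by (intro mult_left_mono) auto
  show ?thesis using split T0 T1 P0 P1 by linarith
qed



context wlc begin

abbreviation MM where "MM \<equiv> {pk. fst pk \<in> coupling \<nu>X \<nu>Y \<and> kvalid mX mY (snd pk)}"

lemma M_props:
  assumes "pk \<in> MM"
  shows "0 \<le> lin (mc_law (fst pk) (snd pk) t) C" "lin (mc_law (fst pk) (snd pk) t) C \<le> Mc"
proof -
  have p: "\<forall>i j. 0 \<le> fst pk i j" "(\<Sum>i\<in>UNIV. \<Sum>j\<in>UNIV. fst pk i j) = 1"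
    using coupling_props[OF nX] assms by auto
  have "(\<forall>i j. 0 \<le> mc_law (fst pk) (snd pk) t i j) \<and> (\<Sum>i\<in>UNIV. \<Sum>j\<in>UNIV. mc_law (fst pk) (snd pk) t i j) = 1"
    by (rule mc_law_props[OF p]) (use assms in auto)
  then show "0 \<le> lin (mc_law (fst pk) (snd pk) t) C" "lin (mc_law (fst pk) (snd pk) t) C \<le> Mc"
    using E_bounds by auto
qed

lemma dWL_lim: "(\<lambda>n. dWL \<delta> mX \<nu>X mY \<nu>Y C (enat n)) \<longlonglongrightarrow> dWL \<delta> mX \<nu>X mY \<nu>Y C \<infinity>"
proof -
  let ?f = "\<lambda>n pk. obj \<delta> C n (fst pk) (snd pk)"
  let ?g = "\<lambda>pk. (\<Sum>t. \<delta> * (1 - \<delta>) ^ t * lin (mc_law (fst pk) (snd pk) t) C)"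
  have e1: "dWL \<delta> mX \<nu>X mY \<nu>Y C (enat n) = Inf (?f n ` MM)" for n
    unfolding dWL_def dWL_set by (simp add: wl_obj_fin)
  have e2: "dWL \<delta> mX \<nu>X mY \<nu>Y C \<infinity> = Inf (?g ` MM)"
    unfolding dWL_def dWL_set by (simp add: wl_objective_def mc_expect_def lin_def)
  have f0: "0 \<le> ?f n pk" if "pk \<in> MM" for n pk
    unfolding obj_def using M_props[OF that] d0 d1
    by (intro add_nonneg_nonneg sum_nonneg mult_nonneg_nonneg) auto
  have g0: "0 \<le> ?g pk" if "pk \<in> MM" for pk
  proof -
    have "\<bar>?f 0 pk - ?g pk\<bar> \<le> (1 - \<delta>) ^ 0 * Mc"
      unfolding obj_def
      by (rule tail_bound[OF d0 d1]) (use M_props[OF that] in auto)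
    have "?g pk = suminf (\<lambda>t. \<delta> * (1 - \<delta>) ^ t * lin (mc_law (fst pk) (snd pk) t) C)" by simp
    moreover have "summable (\<lambda>t. \<delta> * (1 - \<delta>) ^ t * lin (mc_law (fst pk) (snd pk) t) C)"
    proof (rule summable_comparison_test[rotated])
      show "summable (\<lambda>t. (\<delta> * Mc) * (1 - \<delta>) ^ t)"
        using d0 d1 by (intro summable_mult summable_geometric) auto
      show "\<exists>N. \<forall>n\<ge>N. norm (\<delta> * (1 - \<delta>) ^ n * lin (mc_law (fst pk) (snd pk) n) C) \<le> \<delta> * Mc * (1 - \<delta>) ^ n"
        using M_props[OF that] d0 d1
        by (intro exI[of _ 0] allI impI) (auto simp: abs_mult intro!: mult_left_mono mult_right_mono
            simp: mult.commute mult.left_commute)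
    qed
    ultimately show ?thesis
      using M_props[OF that] d0 d1 by (auto intro!: suminf_nonneg)
  qed
  have bnd: "\<bar>dWL \<delta> mX \<nu>X mY \<nu>Y C (enat n) - dWL \<delta> mX \<nu>X mY \<nu>Y C \<infinity>\<bar> \<le> (1 - \<delta>) ^ n * Mc" for n
    unfolding e1 e2
  proof (rule inf_img_abs)
    show "MM \<noteq> {}" by (rule MC_nonempty)
    show "bdd_below (?f n ` MM)" by (rule bdd_belowI2[of _ 0]) (use f0 in auto)
    show "bdd_below (?g ` MM)" by (rule bdd_belowI2[of _ 0]) (use g0 in auto)
    fix pk assume "pk \<in> MM"
    then show "\<bar>?f n pk - ?g pk\<bar> \<le> (1 - \<delta>) ^ n * Mc"
      unfolding obj_def
      by (intro tail_bound[OF d0 d1]) (use M_props in auto)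
  qed
  have "(\<lambda>n. dWL \<delta> mX \<nu>X mY \<nu>Y C (enat n) - dWL \<delta> mX \<nu>X mY \<nu>Y C \<infinity>) \<longlonglongrightarrow> 0"
  proof (rule Lim_null_comparison)
    show "\<forall>\<^sub>F n in sequentially. norm (dWL \<delta> mX \<nu>X mY \<nu>Y C (enat n) - dWL \<delta> mX \<nu>X mY \<nu>Y C \<infinity>) \<le> (1 - \<delta>) ^ n * Mc"
      using bnd by simp
    have "(\<lambda>n. (1 - \<delta>) ^ n) \<longlonglongrightarrow> 0" using d0 d1 by (intro LIMSEQ_power_zero) auto
    then show "(\<lambda>n. (1 - \<delta>) ^ n * Mc) \<longlonglongrightarrow> 0"
      by (rule tendsto_mult_left_zero)
  qed
  then show ?thesis by (simp add: LIM_zero_iff)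
qed

lemma main_bound:
  assumes e: "0 \<le> \<epsilon>"
  shows "\<bar>dWL_eps \<epsilon> \<delta> mX \<nu>X mY \<nu>Y C k - dWL \<delta> mX \<nu>X mY \<nu>Y C k\<bar>
     \<le> \<epsilon> * (real CARD('x) * real CARD('y)) / \<delta> + \<epsilon> * (real CARD('x) * real CARD('y))"
proof (cases k)
  case (enat n)
  have "dWL \<delta> mX \<nu>X mY \<nu>Y C (enat n) = dWL_eps_fin 0 \<delta> mX \<nu>X mY \<nu>Y C n"
    by (simp add: dWL_fin dWL_eps_fin_def)
  then show ?thesis using dfin_err[OF e, of n] enat by (simp add: dWL_eps_def)
next
  case infinity
  let ?d = "\<lambda>n. dWL_eps_fin \<epsilon> \<delta> mX \<nu>X mY \<nu>Y C n"
  have d0eq: "dWL \<delta> mX \<nu>X mY \<nu>Y C (enat n) = dWL_eps_fin 0 \<delta> mX \<nu>X mY \<nu>Y C n" for n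
    by (simp add: dWL_fin dWL_eps_fin_def)
  have l1: "?d \<longlonglongrightarrow> lim ?d" using deps_conv[OF e] by (simp add: convergent_LIMSEQ_iff)
  have "(\<lambda>n. \<bar>?d n - dWL \<delta> mX \<nu>X mY \<nu>Y C (enat n)\<bar>) \<longlonglongrightarrow> \<bar>lim ?d - dWL \<delta> mX \<nu>X mY \<nu>Y C \<infinity>\<bar>"
    by (intro tendsto_intros l1 dWL_lim)
  then have "\<bar>lim ?d - dWL \<delta> mX \<nu>X mY \<nu>Y C \<infinity>\<bar> \<le> \<epsilon> * (real CARD('x) * real CARD('y)) / \<delta> + \<epsilon> * (real CARD('x) * real CARD('y))"
    by (rule tendsto_upperbound) (use dfin_err[OF e] d0eq in \<open>auto intro!: always_eventually\<close>)
  then show ?thesis using infinity by (simp add: dWL_eps_def)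
qed

end


theorem theorem21:
  fixes mX :: "'x::finite \<Rightarrow> 'x \<Rightarrow> real" and \<nu>X :: "'x \<Rightarrow> real"
    and mY :: "'y::finite \<Rightarrow> 'y \<Rightarrow> real" and \<nu>Y :: "'y \<Rightarrow> real"
    and C :: "'x \<Rightarrow> 'y \<Rightarrow> real" and \<delta> :: real and k :: enat
  assumes "markov_kernel mX" and "prob_vec \<nu>X"
    and "markov_kernel mY" and "prob_vec \<nu>Y"
    and "\<forall>x y. 0 \<le> C x y"
    and "0 < \<delta>" and "\<delta> \<le> 1"
  shows "((\<lambda>\<epsilon>. dWL_eps \<epsilon> \<delta> mX \<nu>X mY \<nu>Y C k) \<longlongrightarrow> dWL \<delta> mX \<nu>X mY \<nu>Y C k) (at_right 0)"
proof -
  interpret wlc mX \<nu>X mY \<nu>Y C \<delta> using assms by unfold_locales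
  let ?B = "(real CARD('x) * real CARD('y)) / \<delta> + (real CARD('x) * real CARD('y))"
  have "((\<lambda>\<epsilon>. dWL_eps \<epsilon> \<delta> mX \<nu>X mY \<nu>Y C k - dWL \<delta> mX \<nu>X mY \<nu>Y C k) \<longlongrightarrow> 0) (at_right 0)"
  proof (rule Lim_null_comparison)
    show "\<forall>\<^sub>F \<epsilon> in at_right 0. norm (dWL_eps \<epsilon> \<delta> mX \<nu>X mY \<nu>Y C k - dWL \<delta> mX \<nu>X mY \<nu>Y C k) \<le> \<epsilon> * ?B"
      using eventually_at_right_less[of "0::real"]
    proof (rule eventually_mono)
      fix \<epsilon> :: real assume "0 < \<epsilon>"
      then show "norm (dWL_eps \<epsilon> \<delta> mX \<nu>X mY \<nu>Y C k - dWL \<delta> mX \<nu>X mY \<nu>Y C k) \<le> \<epsilon> * ?B"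
        using main_bound[of \<epsilon> k] by (simp add: ring_distribs)
    qed
    show "((\<lambda>\<epsilon>. \<epsilon> * ?B) \<longlongrightarrow> 0) (at_right 0)"
      by (rule tendsto_mult_left_zero) (rule tendsto_ident_at)
  qed
  then show ?thesis by (simp add: LIM_zero_iff)
qed

end
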